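(* Let $\sigma$ and $\tau$ be compositions of a positive integer $m$ with the same number of parts. Then for every positive integer $n$, the map $\Gamma(\mathsf{hypo}_n,\sigma)\to\Gamma(\mathsf{hypo}_n,\tau)$, $T\mapsto\pi_\tau(\overline{T})$, is an isomorphism of unlabelled directed graphs.
   Context: A quasi-array of size $m$ is an array $Q$ with cells $(i,j)$, $1\le i\le m$, $1\le j\le m-i+1$, each containing a positive integer, with first row weakly increasing and $Q_{(i,j)}=Q_{(1,i+j-1)}+i-1$. A quasi-ribbon tableau of shape $\sigma=(\sigma_1,\dots,\sigma_r)$ is a filling with positive integers of the diagram having $\sigma_i$ cells in row $i$, the leftmost cell of row $i+1$ directly below the rightmost cell of row $i$, weakly increasing along rows and strictly increasing down columns; its column reading is read column by column left to right, each column bottom to top. Quasi-Kashiwara operator $f_i$ on a word $u$: undefined if $u$ contains a subsequence $(i+1)\,i$ or no letter $i$; otherwise replaces the rightmost $i$ by $i+1$. $\Gamma(\mathsf{hypo}_n,\sigma)$ is the directed graph whose vertices are the quasi-ribbon tableaux of shape $\sigma$ with entries in $\{1,\dots,n\}$ (identified with column readings), with an edge $u\to f_i(u)$ labelled $i$, $1\le i\le n-1$, whenever defined. For a quasi-array $Q$ of size $m$ and composition $\tau$ of $m$, $\pi_\tau(Q)$ is the quasi-ribbon tableau formed by the cells of $Q$ making up a quasi-ribbon diagram of shape $\tau$ with first cell $(1,1)$; for a quasi-ribbon tableau $T$ of shape $\sigma$ with $m$ cells, $\overline{T}$ is the unique quasi-array of size $m$ with $\pi_\sigma(\overline{T})=T$.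 *)

theory Defs
  imports Main
begin

definition is_composition :: "nat \<Rightarrow> nat list \<Rightarrow> bool" where
  "is_composition m \<sigma> \<longleftrightarrow> (\<forall>x\<in>set \<sigma>. 0 < x) \<and> sum_list \<sigma> = m"

text \<open>Cells are pairs (row, column), 1-indexed. Row i of the quasi-ribbon diagram of
  shape sigma starts in column ribbon_start sigma i: row 1 starts in column 1 and the
  leftmost cell of row i+1 lies directly below the rightmost cell of row i.\<close>
definition ribbon_start :: "nat list \<Rightarrow> nat \<Rightarrow> nat" where
  "ribbon_start \<sigma> i = 1 + (\<Sum>k<i - 1. \<sigma> ! k - 1)"

definition ribbon_cells :: "nat list \<Rightarrow> (nat \<times> nat) set" where
  "ribbon_cells \<sigma> = {(i, j). 1 \<le> i \<and> i \<le> length \<sigma> \<and>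
      ribbon_start \<sigma> i \<le> j \<and> j < ribbon_start \<sigma> i + \<sigma> ! (i - 1)}"

text \<open>Fillings are functions on cells; by convention they are 0 outside the diagram.\<close>
type_synonym filling = "nat \<times> nat \<Rightarrow> nat"

definition is_qrt :: "nat \<Rightarrow> nat list \<Rightarrow> filling \<Rightarrow> bool" where
  "is_qrt n \<sigma> T \<longleftrightarrow>
     (\<forall>c. c \<notin> ribbon_cells \<sigma> \<longrightarrow> T c = 0) \<and>
     (\<forall>c\<in>ribbon_cells \<sigma>. 1 \<le> T c \<and> T c \<le> n) \<and>
     (\<forall>i j. (i, j) \<in> ribbon_cells \<sigma> \<and> (i, Suc j) \<in> ribbon_cells \<sigma> \<longrightarrow> T (i, j) \<le> T (i, Suc j)) \<and>
     (\<forall>i j. (i, j) \<in> ribbon_cells \<sigma> \<and> (Suc i, j) \<in> ribbon_cells \<sigma> \<longrightarrow> T (i, j) < T (Suc i, j))"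

text \<open>Column reading: columns left to right, each column bottom to top.
  (All columns of the diagram lie in 1..sum sigma.)\<close>
definition col_reading :: "nat list \<Rightarrow> filling \<Rightarrow> nat list" where
  "col_reading \<sigma> T = concat (map (\<lambda>j. map (\<lambda>i. T (i, j))
        (filter (\<lambda>i. (i, j) \<in> ribbon_cells \<sigma>) (rev [1..<Suc (length \<sigma>)])))
      [1..<Suc (sum_list \<sigma>)])"

definition quasi_f :: "nat \<Rightarrow> nat list \<Rightarrow> nat list option" where
  "quasi_f i u =
     (if (\<exists>p q. p < q \<and> q < length u \<and> u ! p = Suc i \<and> u ! q = i) \<or> i \<notin> set u then None
      else Some (u[(GREATEST p. p < length u \<and> u ! p = i) := Suc i]))"

definition hypo_vertices :: "nat \<Rightarrow> nat list \<Rightarrow> filling set" where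
  "hypo_vertices n \<sigma> = {T. is_qrt n \<sigma> T}"

text \<open>Vertices are identified with their column readings; edge u -> f_i(u), 1 <= i <= n-1.\<close>
definition hypo_edges :: "nat \<Rightarrow> nat list \<Rightarrow> (filling \<times> filling) set" where
  "hypo_edges n \<sigma> = {(T, T'). T \<in> hypo_vertices n \<sigma> \<and> T' \<in> hypo_vertices n \<sigma> \<and>
      (\<exists>i. 1 \<le> i \<and> i \<le> n - 1 \<and> quasi_f i (col_reading \<sigma> T) = Some (col_reading \<sigma> T'))}"

definition qa_cells :: "nat \<Rightarrow> (nat \<times> nat) set" where
  "qa_cells m = {(i, j). 1 \<le> i \<and> i \<le> m \<and> 1 \<le> j \<and> j \<le> m - i + 1}"

definition is_quasi_array :: "nat \<Rightarrow> filling \<Rightarrow> bool" where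
  "is_quasi_array m Q \<longleftrightarrow>
     (\<forall>c. c \<notin> qa_cells m \<longrightarrow> Q c = 0) \<and>
     (\<forall>c\<in>qa_cells m. 1 \<le> Q c) \<and>
     (\<forall>j. 1 \<le> j \<and> j < m \<longrightarrow> Q (1, j) \<le> Q (1, Suc j)) \<and>
     (\<forall>(i, j)\<in>qa_cells m. Q (i, j) = Q (1, i + j - 1) + i - 1)"

definition pi_qr :: "nat list \<Rightarrow> filling \<Rightarrow> filling" where
  "pi_qr \<tau> Q = (\<lambda>c. if c \<in> ribbon_cells \<tau> then Q c else 0)"

definition qarray_bar :: "nat list \<Rightarrow> filling \<Rightarrow> filling" where
  "qarray_bar \<sigma> T = (THE Q. is_quasi_array (sum_list \<sigma>) Q \<and> pi_qr \<sigma> Q = T)"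

definition digraph_iso ::
  "'a set \<Rightarrow> ('a \<times> 'a) set \<Rightarrow> 'b set \<Rightarrow> ('b \<times> 'b) set \<Rightarrow> ('a \<Rightarrow> 'b) \<Rightarrow> bool" where
  "digraph_iso V E V' E' \<phi> \<longleftrightarrow> bij_betw \<phi> V V' \<and>
     (\<forall>x\<in>V. \<forall>y\<in>V. (x, y) \<in> E \<longleftrightarrow> (\<phi> x, \<phi> y) \<in> E')"

end

theory Submission imports Defs begin

definition SS :: "nat list \<Rightarrow> nat \<Rightarrow> nat" where
  "SS s t = (\<Sum>k<t. s ! k)"

definition Good :: "nat \<Rightarrow> nat \<Rightarrow> nat \<Rightarrow> (nat \<Rightarrow> nat) \<Rightarrow> bool" where
  "Good m r n a \<longleftrightarrow> (\<forall>k. (k < 1 \<or> m < k) \<longrightarrow> a k = 0) \<and> (\<forall>k. 1 \<le> k \<and> k \<le> m \<longrightarrow> 1 \<le> a k) \<and>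
     (\<forall>k. 1 \<le> k \<and> k < m \<longrightarrow> a k \<le> a (Suc k)) \<and> a m + r - 1 \<le> n"

definition Tf :: "nat list \<Rightarrow> (nat \<Rightarrow> nat) \<Rightarrow> filling" where
  "Tf s a = (\<lambda>c. if c \<in> ribbon_cells s then a (fst c + snd c - 1) + fst c - 1 else 0)"

definition Aq :: "nat \<Rightarrow> (nat \<Rightarrow> nat) \<Rightarrow> filling" where
  "Aq m a = (\<lambda>c. if c \<in> qa_cells m then a (fst c + snd c - 1) + fst c - 1 else 0)"

lemma good_pos: "Good m r n a \<Longrightarrow> 1 \<le> k \<Longrightarrow> k \<le> m \<Longrightarrow> 1 \<le> a k"
  unfolding Good_def by simp
lemma good_zero: "Good m r n a \<Longrightarrow> k < 1 \<or> m < k \<Longrightarrow> a k = 0"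
  unfolding Good_def by auto
lemma good_step: "Good m r n a \<Longrightarrow> 1 \<le> k \<Longrightarrow> k < m \<Longrightarrow> a k \<le> a (Suc k)"
  unfolding Good_def by simp
lemma good_top: "Good m r n a \<Longrightarrow> a m + r - 1 \<le> n"
  unfolding Good_def by simp

lemma good_mono: "Good m r n a \<Longrightarrow> 1 \<le> k \<Longrightarrow> k \<le> k' \<Longrightarrow> k' \<le> m \<Longrightarrow> a k \<le> a k'"
proof (induction k')
  case 0 then show ?case by simp
next
  case (Suc k')
  show ?case
  proof (cases "k = Suc k'")
    case True then show ?thesis by simp
  next
    case False
    then have "a k \<le> a k'" using Suc by simp
    moreover have "a k' \<le> a (Suc k')" using Suc False unfolding Good_def by simp
    ultimately show ?thesis by simp
  qed
qed

lemma sorted_wrt_concat_map: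
  assumes "sorted_wrt (<) (js :: nat list)" "\<forall>j\<in>set js. sorted_wrt P (f j)"
    "\<forall>j j' x y. j < j' \<longrightarrow> x \<in> set (f j) \<longrightarrow> y \<in> set (f j') \<longrightarrow> P x y"
  shows "sorted_wrt P (concat (map f js))"
  using assms by (induction js) (auto simp: sorted_wrt_append)

definition before :: "nat \<times> nat \<Rightarrow> nat \<times> nat \<Rightarrow> bool" where
  "before c c' \<longleftrightarrow> snd c < snd c' \<or> (snd c = snd c' \<and> fst c' < fst c)"

definition colcells :: "nat list \<Rightarrow> (nat \<times> nat) list" where
  "colcells s = concat (map (\<lambda>j. map (\<lambda>i. (i, j))
        (filter (\<lambda>i. (i, j) \<in> ribbon_cells s) (rev [1..<Suc (length s)])))
      [1..<Suc (sum_list s)])"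

lemma col_reading_eq: "col_reading s T = map T (colcells s)"
  unfolding col_reading_def colcells_def by (simp add: map_concat comp_def)

lemma colcells_sorted: "sorted_wrt before (colcells s)"
  unfolding colcells_def
proof (rule sorted_wrt_concat_map)
  show "sorted_wrt (<) [1..<Suc (sum_list s)]" by (rule sorted_wrt_upt)
  show "\<forall>j\<in>set [1..<Suc (sum_list s)]. sorted_wrt before (map (\<lambda>i. (i, j))
        (filter (\<lambda>i. (i, j) \<in> ribbon_cells s) (rev [1..<Suc (length s)])))"
  proof
    fix j
    have "sorted_wrt (\<lambda>x y. before (y, j) (x, j)) [1..<Suc (length s)]"
      by (rule sorted_wrt_mono_rel[OF _ sorted_wrt_upt]) (simp add: before_def)
    then show "sorted_wrt before (map (\<lambda>i. (i, j))
        (filter (\<lambda>i. (i, j) \<in> ribbon_cells s) (rev [1..<Suc (length s)])))"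
      by (simp add: sorted_wrt_map sorted_wrt_filter sorted_wrt_rev)
  qed
  show "\<forall>j j' x y. j < j' \<longrightarrow> x \<in> set (map (\<lambda>i. (i, j))
        (filter (\<lambda>i. (i, j) \<in> ribbon_cells s) (rev [1..<Suc (length s)]))) \<longrightarrow>
        y \<in> set (map (\<lambda>i. (i, j'))
        (filter (\<lambda>i. (i, j') \<in> ribbon_cells s) (rev [1..<Suc (length s)]))) \<longrightarrow> before x y"
    by (auto simp: before_def)
qed

lemma colcells_nth: "p < q \<Longrightarrow> q < length (colcells s) \<Longrightarrow> before (colcells s ! p) (colcells s ! q)"
  using colcells_sorted sorted_wrt_nth_less by blast

lemma colcells_distinct: "distinct (colcells s)"
  unfolding distinct_conv_nth
proof (intro allI impI)
  fix p q assume h: "p < length (colcells s)" "q < length (colcells s)" "p \<noteq> q"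
  show "colcells s ! p \<noteq> colcells s ! q"
  proof (cases "p < q")
    case True then show ?thesis using colcells_nth[of p q s] h by (auto simp: before_def)
  next
    case False then show ?thesis using colcells_nth[of q p s] h by (auto simp: before_def)
  qed
qed

locale shp =
  fixes s :: "nat list"
  assumes pos: "\<forall>x\<in>set s. 0 < x" and ne: "s \<noteq> []"
begin

lemma pos_nth: "k < length s \<Longrightarrow> 0 < s ! k"
  using pos by auto

lemma SS_Suc: "SS s (Suc t) = SS s t + s ! t"
  by (simp add: SS_def)

lemma SS_len: "SS s (length s) = sum_list s"
  by (simp add: SS_def sum_list_sum_nth atLeast0LessThan)

lemma SS_gap: "i \<le> i' \<Longrightarrow> i' \<le> length s \<Longrightarrow> SS s i + (i' - i) \<le> SS s i'"
proof (induction i' arbitrary: i)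
  case 0 then show ?case by simp
next
  case (Suc i')
  show ?case
  proof (cases "i = Suc i'")
    case True then show ?thesis by simp
  next
    case False
    then have "i \<le> i'" using Suc by simp
    then have "SS s i + (i' - i) \<le> SS s i'" using Suc by simp
    moreover have "0 < s ! i'" using Suc pos_nth by simp
    ultimately show ?thesis using \<open>i \<le> i'\<close> by (simp add: SS_Suc)
  qed
qed

lemma SS_mono: "i \<le> i' \<Longrightarrow> i' \<le> length s \<Longrightarrow> SS s i \<le> SS s i'"
  using SS_gap by fastforce

lemma start_eq: "1 \<le> i \<Longrightarrow> i \<le> length s \<Longrightarrow> ribbon_start s i + (i - 1) = 1 + SS s (i - 1)"
proof -
  have h: "t \<le> length s \<Longrightarrow> (\<Sum>k<t. s ! k - 1) + t = SS s t" for t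
  proof (induction t)
    case 0 then show ?case by (simp add: SS_def)
  next
    case (Suc t)
    then have "0 < s ! t" using pos_nth by simp
    then show ?case using Suc by (simp add: SS_Suc)
  qed
  assume "1 \<le> i" "i \<le> length s"
  then show ?thesis unfolding ribbon_start_def using h[of "i - 1"] by simp
qed

lemma R_char: "(i, j) \<in> ribbon_cells s \<longleftrightarrow>
   1 \<le> i \<and> i \<le> length s \<and> SS s (i - 1) < i + j - 1 \<and> i + j - 1 \<le> SS s i"
proof -
  have "SS s i = SS s (i - 1) + s ! (i - 1)" if "1 \<le> i" for i
    using SS_Suc[of "i - 1"] that by simp
  then show ?thesis
    unfolding ribbon_cells_def using start_eq by (auto; fastforce)
qed


lemma SS_strict: "i < i' \<Longrightarrow> i' \<le> length s \<Longrightarrow> SS s i < SS s i'"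
  using SS_gap[of i i'] by simp

lemma R_range: "(i, j) \<in> ribbon_cells s \<Longrightarrow>
   1 \<le> i \<and> i \<le> length s \<and> 1 \<le> j \<and> i + j - 1 \<le> sum_list s"
proof -
  assume a: "(i, j) \<in> ribbon_cells s"
  then have h: "1 \<le> i" "i \<le> length s" "SS s (i - 1) < i + j - 1" "i + j - 1 \<le> SS s i"
    using R_char by auto
  have "SS s 0 + (i - 1 - 0) \<le> SS s (i - 1)" using SS_gap[of 0 "i - 1"] h by simp
  then have "j \<ge> 1" using h by (simp add: SS_def)
  moreover have "SS s i \<le> sum_list s" using SS_mono[of i "length s"] h SS_len by simp
  ultimately show ?thesis using h by simp
qed

lemma R_qa: "c \<in> ribbon_cells s \<Longrightarrow> c \<in> qa_cells (sum_list s)"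
  using R_range[of "fst c" "snd c"] unfolding qa_cells_def by (cases c) auto

lemma R_mono: "(i, j) \<in> ribbon_cells s \<Longrightarrow> (i', j') \<in> ribbon_cells s \<Longrightarrow>
   i + j \<le> i' + j' \<Longrightarrow> i \<le> i' \<and> j \<le> j'"
proof -
  assume a: "(i, j) \<in> ribbon_cells s" and b: "(i', j') \<in> ribbon_cells s" and d: "i + j \<le> i' + j'"
  have ha: "1 \<le> i" "i \<le> length s" "SS s (i - 1) < i + j - 1" "i + j - 1 \<le> SS s i"
    using a R_char by auto
  have hb: "1 \<le> i'" "i' \<le> length s" "SS s (i' - 1) < i' + j' - 1" "i' + j' - 1 \<le> SS s i'"
    using b R_char by auto
  have ii: "i \<le> i'"
  proof (rule ccontr)
    assume "\<not> i \<le> i'"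
    then have "SS s i' \<le> SS s (i - 1)" using SS_mono[of i' "i - 1"] ha by simp
    then show False using ha hb d by simp
  qed
  moreover have "j \<le> j'"
  proof (cases "i = i'")
    case True then show ?thesis using d by simp
  next
    case False
    then have "i \<le> i' - 1" using ii by simp
    then have "SS s i + (i' - 1 - i) \<le> SS s (i' - 1)" using SS_gap[of i "i' - 1"] hb by simp
    then show ?thesis using ha hb ii False by simp
  qed
  ultimately show ?thesis by simp
qed

lemma R_inj: "c \<in> ribbon_cells s \<Longrightarrow> c' \<in> ribbon_cells s \<Longrightarrow>
   fst c + snd c = fst c' + snd c' \<Longrightarrow> c = c'"
  using R_mono[of "fst c" "snd c" "fst c'" "snd c'"] by (cases c, cases c') force

lemma R_next: "(i, j) \<in> ribbon_cells s \<Longrightarrow> i + j - 1 < sum_list s \<Longrightarrow>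
   (i, Suc j) \<in> ribbon_cells s \<or> (Suc i, j) \<in> ribbon_cells s"
proof -
  assume a: "(i, j) \<in> ribbon_cells s" and lt: "i + j - 1 < sum_list s"
  have ha: "1 \<le> i" "i \<le> length s" "SS s (i - 1) < i + j - 1" "i + j - 1 \<le> SS s i"
    using a R_char by auto
  show ?thesis
  proof (cases "i + j \<le> SS s i")
    case True then show ?thesis using ha R_char by auto
  next
    case False
    then have eq: "i + j - 1 = SS s i" using ha by simp
    have "i < length s"
    proof (rule ccontr)
      assume "\<not> i < length s"
      then have "i = length s" using ha by simp
      then show False using eq lt SS_len by simp
    qed
    then have "0 < s ! i" using pos_nth by simp
    moreover have "SS s i < i + j" "i + j \<le> SS s i + s ! i" using ha eq \<open>0 < s ! i\<close> by arith+
    ultimately have "(Suc i, j) \<in> ribbon_cells s"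
      unfolding R_char using ha eq \<open>i < length s\<close> by (simp add: SS_Suc)
    then show ?thesis by simp
  qed
qed

lemma R_exists: "1 \<le> k \<Longrightarrow> k \<le> sum_list s \<Longrightarrow> \<exists>c\<in>ribbon_cells s. fst c + snd c - 1 = k"
proof -
  assume k: "1 \<le> k" "k \<le> sum_list s"
  define i where "i = (LEAST i. k \<le> SS s i)"
  have ex: "k \<le> SS s (length s)" using k SS_len by simp
  then have i1: "k \<le> SS s i" unfolding i_def by (rule LeastI)
  have i2: "i \<le> length s" unfolding i_def using ex by (rule Least_le)
  have "i \<noteq> 0" using i1 k by (cases "i = 0") (auto simp: SS_def)
  then have i3: "SS s (i - 1) < k" using not_less_Least[of "i - 1" "\<lambda>i. k \<le> SS s i"] i_def by simp
  have "SS s 0 + (i - 1 - 0) \<le> SS s (i - 1)" using SS_gap[of 0 "i - 1"] i2 by simp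
  then have "i \<le> k" using i3 \<open>i \<noteq> 0\<close> by (simp add: SS_def)
  then have "(i, k + 1 - i) \<in> ribbon_cells s"
    unfolding R_char using i1 i2 i3 \<open>i \<noteq> 0\<close> by simp
  then show ?thesis using \<open>i \<le> k\<close> by (intro bexI[of _ "(i, k + 1 - i)"]) auto
qed

definition cell :: "nat \<Rightarrow> nat \<times> nat" where
  "cell k = (THE c. c \<in> ribbon_cells s \<and> fst c + snd c - 1 = k)"

lemma cell: "1 \<le> k \<Longrightarrow> k \<le> sum_list s \<Longrightarrow> cell k \<in> ribbon_cells s \<and> fst (cell k) + snd (cell k) - 1 = k"
  unfolding cell_def
  by (rule theI') (use R_exists R_inj R_range in \<open>fastforce\<close>)

lemma cell_eq: "c \<in> ribbon_cells s \<Longrightarrow> cell (fst c + snd c - 1) = c"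
proof -
  assume c: "c \<in> ribbon_cells s"
  have r: "1 \<le> fst c + snd c - 1" "fst c + snd c - 1 \<le> sum_list s"
    using R_range[of "fst c" "snd c"] c by auto
  obtain x y where xy: "cell (fst c + snd c - 1) = (x, y)" by fastforce
  have "fst c + snd c = fst (cell (fst c + snd c - 1)) + snd (cell (fst c + snd c - 1))"
    using cell[OF r] R_range[of "fst c" "snd c"] c R_range[of x y] unfolding xy
    by simp arith
  then show ?thesis using R_inj[of c "cell (fst c + snd c - 1)"] c cell[OF r] by simp
qed

lemma cell1: "(1, 1) \<in> ribbon_cells s"
proof -
  have "0 < s ! 0" using ne pos_nth by simp
  moreover have "1 \<le> length s" using ne by (cases s) auto
  ultimately show ?thesis unfolding R_char by (simp add: SS_def)
qed

lemma cell_last: "c \<in> ribbon_cells s \<Longrightarrow> fst c + snd c - 1 = sum_list s \<Longrightarrow> fst c = length s"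
proof -
  assume c: "c \<in> ribbon_cells s" and e: "fst c + snd c - 1 = sum_list s"
  have ha: "1 \<le> fst c" "fst c \<le> length s" "fst c + snd c - 1 \<le> SS s (fst c)"
    using c R_char[of "fst c" "snd c"] by auto
  show ?thesis
  proof (rule ccontr)
    assume "fst c \<noteq> length s"
    then have "SS s (fst c) < SS s (length s)" using SS_strict ha by simp
    then show False using ha e SS_len by simp
  qed
qed


lemma m_pos: "0 < sum_list s"
  using R_range[OF cell1] by simp

lemma pi_Aq: "pi_qr s (Aq (sum_list s) a) = Tf s a"
  unfolding pi_qr_def Aq_def Tf_def using R_qa by (auto simp: fun_eq_iff)

lemma Tf_qrt: "Good (sum_list s) (length s) n a \<Longrightarrow> is_qrt n s (Tf s a)"
proof -
  assume g: "Good (sum_list s) (length s) n a"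
  have A: "1 \<le> Tf s a c \<and> Tf s a c \<le> n" if c: "c \<in> ribbon_cells s" for c
  proof -
    obtain i j where ij: "c = (i, j)" by fastforce
    have r: "1 \<le> i" "i \<le> length s" "1 \<le> j" "i + j - 1 \<le> sum_list s"
      using R_range c ij by auto
    have "1 \<le> a (i + j - 1)" using g r unfolding Good_def by simp
    moreover have "a (i + j - 1) \<le> a (sum_list s)" using good_mono[OF g, of "i + j - 1" "sum_list s"] r by simp
    moreover have "a (sum_list s) + length s - 1 \<le> n" using g unfolding Good_def by simp
    ultimately have "1 \<le> a (i + j - 1) + i - 1 \<and> a (i + j - 1) + i - 1 \<le> n" using r by arith
    then show ?thesis unfolding Tf_def using c ij r by simp
  qed
  have B: "Tf s a (i, j) \<le> Tf s a (i, Suc j)"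
    if "(i, j) \<in> ribbon_cells s" "(i, Suc j) \<in> ribbon_cells s" for i j
  proof -
    have r: "1 \<le> i" "1 \<le> j" "i + Suc j - 1 \<le> sum_list s"
      using R_range[OF that(2)] R_range[OF that(1)] by auto
    then have "a (i + j - 1) \<le> a (i + j)" using good_mono[OF g, of "i + j - 1" "i + j"] by simp
    then show ?thesis unfolding Tf_def using that r by simp
  qed
  have C: "Tf s a (i, j) < Tf s a (Suc i, j)"
    if "(i, j) \<in> ribbon_cells s" "(Suc i, j) \<in> ribbon_cells s" for i j
  proof -
    have r: "1 \<le> i" "1 \<le> j" "Suc i + j - 1 \<le> sum_list s"
      using R_range[OF that(2)] R_range[OF that(1)] by auto
    then have "a (i + j - 1) \<le> a (i + j)" using good_mono[OF g, of "i + j - 1" "i + j"] by simp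
    then show ?thesis unfolding Tf_def using that r by simp
  qed
  show ?thesis unfolding is_qrt_def using A B C by (auto simp: Tf_def)
qed

lemma Tf_inj: "Good (sum_list s) r n a \<Longrightarrow> Good (sum_list s) r' n' b \<Longrightarrow> Tf s a = Tf s b \<Longrightarrow> a = b"
proof
  fix k
  assume ga: "Good (sum_list s) r n a" and gb: "Good (sum_list s) r' n' b" and e: "Tf s a = Tf s b"
  show "a k = b k"
  proof (cases "1 \<le> k \<and> k \<le> sum_list s")
    case True
    have "Tf s a (cell k) = Tf s b (cell k)" using e by simp
    moreover have "1 \<le> fst (cell k)" using cell[of k] True R_range[of "fst (cell k)" "snd (cell k)"] by simp
    ultimately show ?thesis using cell[of k] True unfolding Tf_def by simp
  next
    case False
    then have "k < 1 \<or> sum_list s < k" by auto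
    then have "a k = 0" "b k = 0" using good_zero[OF ga] good_zero[OF gb] by auto
    then show ?thesis by simp
  qed
qed

lemma qrt_Tf: "is_qrt n s T \<Longrightarrow> \<exists>a. Good (sum_list s) (length s) n a \<and> T = Tf s a"
proof -
  assume q: "is_qrt n s T"
  define g where "g k = int (T (cell k)) - int (fst (cell k))" for k
  have step: "g k \<le> g (Suc k)" if k: "1 \<le> k" "k < sum_list s" for k
  proof -
    obtain i j where ij: "cell k = (i, j)" by fastforce
    have c: "(i, j) \<in> ribbon_cells s" "i + j - 1 = k" using cell[of k] k ij by auto
    have r: "1 \<le> i" "1 \<le> j" using R_range c by auto
    have "(i, Suc j) \<in> ribbon_cells s \<or> (Suc i, j) \<in> ribbon_cells s" using R_next[OF c(1)] c k by simp
    then show ?thesis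
    proof
      assume n: "(i, Suc j) \<in> ribbon_cells s"
      have "Suc k = i + j" using c r by arith
      then have "cell (Suc k) = (i, Suc j)" using cell_eq[OF n] by simp
      moreover have "T (i, j) \<le> T (i, Suc j)" using q c n unfolding is_qrt_def by blast
      ultimately show ?thesis unfolding g_def using ij by simp
    next
      assume n: "(Suc i, j) \<in> ribbon_cells s"
      have "Suc k = i + j" using c r by arith
      then have "cell (Suc k) = (Suc i, j)" using cell_eq[OF n] by simp
      moreover have "T (i, j) < T (Suc i, j)" using q c n unfolding is_qrt_def by blast
      ultimately show ?thesis unfolding g_def using ij by simp
    qed
  qed
  have gm: "g k \<le> g k'" if "1 \<le> k" "k \<le> k'" "k' \<le> sum_list s" for k k'
    using that
  proof (induction k')
    case 0 then show ?case by simp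
  next
    case (Suc k')
    show ?case
    proof (cases "k = Suc k'")
      case True then show ?thesis by simp
    next
      case False
      then show ?thesis using Suc step[of k'] by force
    qed
  qed
  have c1: "cell 1 = (1, 1)" using cell_eq[OF cell1] by simp
  have "1 \<le> T (1, 1)" using q cell1 unfolding is_qrt_def by blast
  then have g1: "0 \<le> g 1" unfolding g_def c1 by simp
  define a where "a k = (if 1 \<le> k \<and> k \<le> sum_list s then nat (g k) + 1 else 0)" for k
  have g0: "0 \<le> g k" if "1 \<le> k" "k \<le> sum_list s" for k
    using gm[of 1 k] that g1 by simp
  have G: "Good (sum_list s) (length s) n a"
    unfolding Good_def
  proof (intro conjI allI impI)
    fix k assume "k < 1 \<or> sum_list s < k" then show "a k = 0" unfolding a_def by auto
  next
    fix k assume "1 \<le> k \<and> k \<le> sum_list s" then show "1 \<le> a k" unfolding a_def by auto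
  next
    fix k assume k: "1 \<le> k \<and> k < sum_list s"
    then show "a k \<le> a (Suc k)" unfolding a_def using step[of k] by simp
  next
    have mp: "1 \<le> sum_list s" using m_pos by simp
    have cm: "cell (sum_list s) \<in> ribbon_cells s" "fst (cell (sum_list s)) + snd (cell (sum_list s)) - 1 = sum_list s"
      using cell[of "sum_list s"] mp by auto
    have fm: "fst (cell (sum_list s)) = length s" using cell_last cm by blast
    have "T (cell (sum_list s)) \<le> n" using q cm unfolding is_qrt_def by blast
    then show "a (sum_list s) + length s - 1 \<le> n"
      unfolding a_def g_def using mp fm g0[of "sum_list s"] unfolding g_def by simp
  qed
  have "T = Tf s a"
  proof
    fix c
    show "T c = Tf s a c"
    proof (cases "c \<in> ribbon_cells s")
      case False then show ?thesis using q unfolding is_qrt_def Tf_def by (cases c) simp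
    next
      case True
      obtain i j where ij: "c = (i, j)" by fastforce
      have r: "1 \<le> i" "1 \<le> j" "i + j - 1 \<le> sum_list s" using R_range True ij by auto
      have ce: "cell (i + j - 1) = (i, j)" using cell_eq True ij by force
      have "0 \<le> g (i + j - 1)" using g0 r by simp
      then have le: "i \<le> T (i, j)" unfolding g_def ce by simp
      then have e: "nat (int (T (i, j)) - int i) = T (i, j) - i" by simp
      have "1 \<le> i + j - 1" using r by simp
      then show ?thesis unfolding Tf_def a_def using True ij r ce le unfolding g_def e by simp
    qed
  qed
  then show ?thesis using G by blast
qed

lemma Aq_qa: "Good (sum_list s) r n a \<Longrightarrow> is_quasi_array (sum_list s) (Aq (sum_list s) a)"
  unfolding is_quasi_array_def
proof (intro conjI allI impI ballI)
  assume g: "Good (sum_list s) r n a"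
  fix c assume c: "c \<in> qa_cells (sum_list s)"
  obtain i j where ij: "c = (i, j)" by fastforce
  have r: "1 \<le> i + j - 1" "i + j - 1 \<le> sum_list s" "1 \<le> i" using c ij unfolding qa_cells_def by auto
  then have "1 \<le> a (i + j - 1)" using good_pos[OF g] by simp
  then have "1 \<le> a (i + j - 1) + i - 1" using r by simp
  then show "1 \<le> Aq (sum_list s) a c" using c ij unfolding Aq_def by simp
next
  assume g: "Good (sum_list s) r n a"
  fix j assume "1 \<le> j \<and> j < sum_list s"
  then show "Aq (sum_list s) a (1, j) \<le> Aq (sum_list s) a (1, Suc j)"
    using g unfolding Aq_def qa_cells_def Good_def by auto
next
  fix c assume "c \<notin> qa_cells (sum_list s)"
  then show "Aq (sum_list s) a c = 0" unfolding Aq_def by simp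
next
  fix c assume "c \<in> qa_cells (sum_list s)"
  then show "case c of (i, j) \<Rightarrow> Aq (sum_list s) a (i, j) = Aq (sum_list s) a (1, i + j - 1) + i - 1"
    unfolding Aq_def qa_cells_def by auto
qed

lemma bar_Tf: "Good (sum_list s) r n a \<Longrightarrow> qarray_bar s (Tf s a) = Aq (sum_list s) a"
  unfolding qarray_bar_def
proof (rule the_equality)
  assume g: "Good (sum_list s) r n a"
  show "is_quasi_array (sum_list s) (Aq (sum_list s) a) \<and> pi_qr s (Aq (sum_list s) a) = Tf s a"
    using Aq_qa[OF g] pi_Aq by simp
next
  fix Q
  assume g: "Good (sum_list s) r n a"
    and Q: "is_quasi_array (sum_list s) Q \<and> pi_qr s Q = Tf s a"
  have first: "Q (1, k) = a k" if k: "1 \<le> k" "k \<le> sum_list s" for k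
  proof -
    obtain i j where ij: "cell k = (i, j)" by fastforce
    have c: "(i, j) \<in> ribbon_cells s" "i + j - 1 = k" using cell[of k] k ij by auto
    have "(i, j) \<in> qa_cells (sum_list s)" using R_qa c by simp
    then have "Q (i, j) = Q (1, k) + i - 1" using Q c unfolding is_quasi_array_def by auto
    moreover have "pi_qr s Q (i, j) = Tf s a (i, j)" using Q by simp
    then have "Q (i, j) = Tf s a (i, j)" using c unfolding pi_qr_def by simp
    moreover have "1 \<le> i" using R_range c by simp
    ultimately show ?thesis unfolding Tf_def using c by simp
  qed
  show "Q = Aq (sum_list s) a"
  proof
    fix c :: "nat \<times> nat"
    obtain i j where ij: "c = (i, j)" by fastforce
    show "Q c = Aq (sum_list s) a c"
    proof (cases "c \<in> qa_cells (sum_list s)")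
      case False then show ?thesis using Q unfolding is_quasi_array_def Aq_def by (cases c) simp
    next
      case True
      then have "Q (i, j) = Q (1, i + j - 1) + i - 1" using Q ij unfolding is_quasi_array_def by auto
      moreover have "1 \<le> i + j - 1" "i + j - 1 \<le> sum_list s" using True ij unfolding qa_cells_def by auto
      ultimately show ?thesis using first True ij unfolding Aq_def by simp
    qed
  qed
qed


lemma colcells_set: "set (colcells s) = ribbon_cells s"
proof -
  have "c \<in> set (colcells s)" if "c \<in> ribbon_cells s" for c
  proof -
    obtain i j where ij: "c = (i, j)" by fastforce
    have "1 \<le> i" "i \<le> length s" "1 \<le> j" "i + j - 1 \<le> sum_list s" using R_range that ij by auto
    then show ?thesis unfolding colcells_def using that ij by (force simp del: upt_Suc)
  qed
  moreover have "c \<in> ribbon_cells s" if "c \<in> set (colcells s)" for c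
    using that unfolding colcells_def by auto
  ultimately show ?thesis by blast
qed

lemma Tf_val: "c \<in> ribbon_cells s \<Longrightarrow> Tf s a c = a (fst c + snd c - 1) + fst c - 1"
  unfolding Tf_def by simp


lemma Tmono: "Good (sum_list s) r n a \<Longrightarrow> c \<in> ribbon_cells s \<Longrightarrow> c' \<in> ribbon_cells s \<Longrightarrow>
   fst c + snd c \<le> fst c' + snd c' \<Longrightarrow> Tf s a c \<le> Tf s a c'"
proof -
  assume g: "Good (sum_list s) r n a" and c: "c \<in> ribbon_cells s" and c': "c' \<in> ribbon_cells s"
    and d: "fst c + snd c \<le> fst c' + snd c'"
  obtain i j i' j' where ij: "c = (i, j)" "c' = (i', j')" by fastforce
  have r: "1 \<le> i" "1 \<le> j" "i + j - 1 \<le> sum_list s" "1 \<le> i'" "1 \<le> j'" "i' + j' - 1 \<le> sum_list s"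
    using R_range c c' ij by auto
  have "i \<le> i'" using R_mono c c' d ij by auto
  moreover have "a (i + j - 1) \<le> a (i' + j' - 1)" using good_mono[OF g, of "i + j - 1" "i' + j' - 1"] r d ij by simp
  ultimately show ?thesis using Tf_val c c' ij by simp
qed

end

context shp begin
lemma edge_fwd:
  assumes ga: "Good (sum_list s) (length s) n a" and gb: "Good (sum_list s) (length s) n b"
    and q: "quasi_f i (map (Tf s a) (colcells s)) = Some (map (Tf s b) (colcells s))"
  shows "\<exists>k. 1 \<le> k \<and> k \<le> sum_list s \<and> b = a(k := Suc (a k))"
proof -
  define L where "L = colcells s"
  define u where "u = map (Tf s a) L"
  define G where "G = (GREATEST p. p < length u \<and> u ! p = i)"
  have iu: "i \<in> set u" and w: "map (Tf s b) L = u[G := Suc i]"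
    using q unfolding quasi_f_def u_def L_def G_def by (auto split: if_splits)
  have "\<exists>p. p < length u \<and> u ! p = i" using iu by (auto simp: in_set_conv_nth)
  then have G: "G < length u \<and> u ! G = i" unfolding G_def by (rule GreatestI_ex_nat[where b = "length u"]) simp
  define c0 where "c0 = L ! G"
  have lenL: "length u = length L" unfolding u_def by simp
  have GL: "G < length L" using G lenL by simp
  have c0R: "c0 \<in> ribbon_cells s" using GL colcells_set unfolding c0_def L_def by (metis nth_mem)
  have "u ! G = Tf s a (L ! G)" unfolding u_def using GL by simp
  then have Tc0: "Tf s a c0 = i" using G unfolding c0_def by simp
  define k where "k = fst c0 + snd c0 - 1"
  have "(fst c0, snd c0) \<in> ribbon_cells s" using c0R by (simp only: prod.collapse)
  note rr = R_range[OF this]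
  have r1: "1 \<le> fst c0" "fst c0 \<le> length s" "1 \<le> snd c0" "fst c0 + snd c0 - 1 \<le> sum_list s"
    using rr by simp_all
  have kr1: "1 \<le> k" unfolding k_def using r1(1) r1(3) by simp
  have kr2: "k \<le> sum_list s" unfolding k_def using r1(4) by simp
  note kr = kr1 kr2 r1(1)
  have wn: "Tf s b (L ! p) = (if p = G then Suc i else Tf s a (L ! p))" if "p < length L" for p
  proof -
    have "map (Tf s b) L ! p = u[G := Suc i] ! p" using w by simp
    then show ?thesis using that lenL unfolding u_def by (simp add: nth_list_update)
  qed
  have "b = a(k := Suc (a k))"
  proof
    fix k'
    show "b k' = (a(k := Suc (a k))) k'"
    proof (cases "1 \<le> k' \<and> k' \<le> sum_list s")
      case False
      then have "k' < 1 \<or> sum_list s < k'" by auto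
      then have "a k' = 0" "b k' = 0" using good_zero[OF ga] good_zero[OF gb] by presburger+
      moreover have "k' \<noteq> k"
      proof
        assume "k' = k"
        then have "1 \<le> k' \<and> k' \<le> sum_list s" using kr1 kr2 by simp
        then show False using False by simp
      qed
      ultimately show ?thesis by simp
    next
      case True
      define c' where "c' = cell k'"
      have c'R: "c' \<in> ribbon_cells s" "fst c' + snd c' - 1 = k'" using cell[of k'] True unfolding c'_def by auto
      have "(fst c', snd c') \<in> ribbon_cells s" using c'R by (simp only: prod.collapse)
      note rr' = R_range[OF this]
      have f1: "1 \<le> fst c'" using rr' by simp
      obtain p where p: "p < length L" "L ! p = c'" using c'R colcells_set unfolding L_def by (metis in_set_conv_nth)
      show ?thesis
      proof (cases "p = G")
        case True
        then have "c' = c0" using p c0_def by simp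
        then have "k' = k" using c'R k_def by simp
        have "Tf s b c0 = Suc i" using wn[OF p(1)] True p \<open>c' = c0\<close> by simp
        moreover have "Tf s b c0 = b k + fst c0 - 1" unfolding k_def by (rule Tf_val[OF c0R])
        moreover have "Tf s a c0 = a k + fst c0 - 1" unfolding k_def by (rule Tf_val[OF c0R])
        ultimately have "b k + fst c0 - 1 = Suc (a k + fst c0 - 1)" using Tc0 by simp
        then show ?thesis using \<open>k' = k\<close> kr by simp
      next
        case False
        have dl: "distinct L" unfolding L_def by (rule colcells_distinct)
        have "L ! p \<noteq> L ! G" using False p(1) GL dl by (simp add: nth_eq_iff_index_eq)
        then have "c' \<noteq> c0" using p(2) unfolding c0_def by simp
        have "k' \<noteq> k"
        proof
          assume "k' = k"
          then have "c' = cell k" using c'_def by simp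
          also have "cell k = c0" unfolding k_def by (rule cell_eq[OF c0R])
          finally show False using \<open>c' \<noteq> c0\<close> by simp
        qed
        have "Tf s b c' = Tf s a c'" using wn[OF p(1)] False p by simp
        moreover have "Tf s b c' = b k' + fst c' - 1" using Tf_val[OF c'R(1)] c'R(2) by simp
        moreover have "Tf s a c' = a k' + fst c' - 1" using Tf_val[OF c'R(1)] c'R(2) by simp
        ultimately have "b k' + fst c' - 1 = a k' + fst c' - 1" by simp
        then show ?thesis using \<open>k' \<noteq> k\<close> f1 by simp
      qed
    qed
  qed
  then show ?thesis using kr by blast
qed

lemma F3:
  assumes g: "Good (sum_list s) r n a" and c0: "(i0, j0) \<in> ribbon_cells s" "i0 + j0 - 1 = k"
    and st: "k < sum_list s \<Longrightarrow> a k < a (Suc k)"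
    and c: "(x, y) \<in> ribbon_cells s" and d: "k < x + y - 1"
  shows "a k + i0 - 1 < Tf s a (x, y)"
proof -
  have r0: "1 \<le> i0" "1 \<le> j0" using R_range[OF c0(1)] by simp_all
  have r: "1 \<le> x" "1 \<le> y" "x + y - 1 \<le> sum_list s" using R_range[OF c] by simp_all
  have "i0 + j0 \<le> x + y" using c0(2) d r0 by simp
  then have "i0 \<le> x" using R_mono[OF c0(1) c] by simp
  have km: "k < sum_list s" using d r by simp
  have k1: "1 \<le> Suc k" by simp
  have "a (Suc k) \<le> a (x + y - 1)" using good_mono[OF g k1] d r(3) by simp
  moreover have "a k < a (Suc k)" using st km by simp
  moreover have "Tf s a (x, y) = a (x + y - 1) + x - 1" using Tf_val[OF c] by simp
  ultimately show ?thesis using \<open>i0 \<le> x\<close> r0 r by simp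
qed

lemma F4:
  assumes g: "Good (sum_list s) r n a" and c0: "(i0, j0) \<in> ribbon_cells s" "i0 + j0 - 1 = k"
    and c: "(x, y) \<in> ribbon_cells s" and d: "x + y - 1 \<le> k"
  shows "Tf s a (x, y) \<le> a k + i0 - 1" and "x < i0 \<Longrightarrow> Tf s a (x, y) < a k + i0 - 1"
proof -
  have r0: "1 \<le> i0" "1 \<le> j0" using R_range[OF c0(1)] by simp_all
  have r: "1 \<le> x" "1 \<le> y" "x + y - 1 \<le> sum_list s" using R_range[OF c] by simp_all
  have dd: "x + y \<le> i0 + j0" using c0(2) d r r0 by simp
  then have "x \<le> i0" using R_mono[OF c c0(1)] by simp
  have k1: "1 \<le> x + y - 1" using r by simp
  have "k \<le> sum_list s" using R_range[OF c0(1)] c0(2) by simp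
  then have "a (x + y - 1) \<le> a k" using good_mono[OF g k1] d by simp
  moreover have "Tf s a (x, y) = a (x + y - 1) + x - 1" using Tf_val[OF c] by simp
  moreover have "1 \<le> a (x + y - 1)" using good_pos[OF g k1 r(3)] .
  ultimately show "Tf s a (x, y) \<le> a k + i0 - 1" "x < i0 \<Longrightarrow> Tf s a (x, y) < a k + i0 - 1"
    using \<open>x \<le> i0\<close> r0 r by simp_all
qed


lemma edge_bwd:
  assumes ga: "Good (sum_list s) (length s) n a" and gb: "Good (sum_list s) (length s) n b"
    and k: "1 \<le> k" "k \<le> sum_list s" and bdef: "b = a(k := Suc (a k))"
  shows "\<exists>i. 1 \<le> i \<and> i \<le> n - 1 \<and>
     quasi_f i (map (Tf s a) (colcells s)) = Some (map (Tf s b) (colcells s))"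
proof -
  define L where "L = colcells s"
  define u where "u = map (Tf s a) L"
  have lenL: "length u = length L" unfolding u_def by simp
  have dl: "distinct L" unfolding L_def by (rule colcells_distinct)
  have setL: "set L = ribbon_cells s" unfolding L_def by (rule colcells_set)
  have un: "u ! p = Tf s a (L ! p)" if "p < length L" for p unfolding u_def using that by simp
  have inL: "L ! p \<in> ribbon_cells s" if "p < length L" for p using that setL nth_mem by metis
  obtain i0 j0 where c0: "cell k = (i0, j0)" by fastforce
  have c0R: "(i0, j0) \<in> ribbon_cells s" "i0 + j0 - 1 = k" using cell[OF k] c0 by simp_all
  have r0: "1 \<le> i0" "1 \<le> j0" using R_range[OF c0R(1)] by simp_all
  define i where "i = a k + i0 - 1"
  have ak: "1 \<le> a k" using good_pos[OF ga k] .
  have bk: "b k = Suc (a k)" using bdef by simp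
  have st: "a k < a (Suc k)" if "k < sum_list s"
  proof -
    have "b k \<le> b (Suc k)" using good_step[OF gb k(1) that] .
    moreover have "b (Suc k) = a (Suc k)" using bdef by simp
    ultimately show ?thesis using bk by simp
  qed
  have Ta0: "Tf s a (i0, j0) = i" unfolding i_def using Tf_val[OF c0R(1)] c0R(2) by simp
  have Tb0: "Tf s b (i0, j0) = Suc i" unfolding i_def using Tf_val[OF c0R(1)] c0R(2) bk ak r0 by simp
  have "Tf s b (i0, j0) \<le> n" using Tf_qrt[OF gb] c0R(1) unfolding is_qrt_def by blast
  then have iub: "i \<le> n - 1" using Tb0 by simp
  have ilb: "1 \<le> i" unfolding i_def using ak r0 by simp
  have F3': "k < x + y - 1" if "(x, y) \<in> ribbon_cells s" "Tf s a (x, y) = Suc i" for x y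
  proof (rule ccontr)
    assume "\<not> k < x + y - 1"
    then have "x + y - 1 \<le> k" by simp
    then have "Tf s a (x, y) \<le> a k + i0 - 1" using F4(1)[OF ga c0R that(1)] by simp
    then show False using that(2) unfolding i_def by simp
  qed
  have F4': "x + y - 1 \<le> k" if "(x, y) \<in> ribbon_cells s" "Tf s a (x, y) = i" for x y
  proof (rule ccontr)
    assume "\<not> x + y - 1 \<le> k"
    then have "k < x + y - 1" by simp
    then have "a k + i0 - 1 < Tf s a (x, y)" using F3[OF ga c0R st that(1)] by simp
    then show False using that(2) unfolding i_def by simp
  qed
  have nobad: "\<not> (\<exists>p q. p < q \<and> q < length u \<and> u ! p = Suc i \<and> u ! q = i)"
  proof
    assume "\<exists>p q. p < q \<and> q < length u \<and> u ! p = Suc i \<and> u ! q = i"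
    then obtain p q where pq: "p < q" "q < length L" "u ! p = Suc i" "u ! q = i" using lenL by auto
    have pL: "p < length L" using pq by simp
    obtain x y where xy: "L ! p = (x, y)" by fastforce
    obtain x' y' where xy': "L ! q = (x', y')" by fastforce
    have cR: "(x, y) \<in> ribbon_cells s" using inL[OF pL] xy by simp
    have cR': "(x', y') \<in> ribbon_cells s" using inL[OF pq(2)] xy' by simp
    have T: "Tf s a (x, y) = Suc i" using un[OF pL] pq(3) xy by simp
    have T': "Tf s a (x', y') = i" using un[OF pq(2)] pq(4) xy' by simp
    have d: "k < x + y - 1" using F3'[OF cR T] .
    have d': "x' + y' - 1 \<le> k" using F4'[OF cR' T'] .
    have r: "1 \<le> x" "1 \<le> y" "x + y - 1 \<le> sum_list s" using R_range[OF cR] by simp_all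
    have r': "1 \<le> x'" "1 \<le> y'" using R_range[OF cR'] by simp_all
    have "x' + y' \<le> x + y" using d d' r r' by simp
    then have mono: "x' \<le> x" "y' \<le> y" using R_mono[OF cR' cR] by simp_all
    have "before (L ! p) (L ! q)" using colcells_nth[of p q s] pq unfolding L_def by simp
    then have "y < y' \<or> (y = y' \<and> x' < x)" using xy xy' unfolding before_def by simp
    then have xx: "x' < x" using mono by auto
    have km: "k < sum_list s" using d r by simp
    have k1: "1 \<le> Suc k" by simp
    have "a (Suc k) \<le> a (x + y - 1)" using good_mono[OF ga k1] d r(3) by simp
    moreover have "a (x' + y' - 1) \<le> a k" using good_mono[OF ga _ d' k(2)] r' by simp
    moreover have "a k < a (Suc k)" using st km .
    moreover have "Tf s a (x, y) = a (x + y - 1) + x - 1" using Tf_val[OF cR] by simp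
    moreover have "Tf s a (x', y') = a (x' + y' - 1) + x' - 1" using Tf_val[OF cR'] by simp
    moreover have "1 \<le> a (x' + y' - 1)" using good_pos[OF ga _ ] d' k(2) r' by simp
    ultimately have A: "a (x' + y' - 1) + 1 \<le> a (x + y - 1)"
      and E: "Tf s a (x, y) = a (x + y - 1) + x - 1" "Tf s a (x', y') = a (x' + y' - 1) + x' - 1" by simp_all
    have "a (x' + y' - 1) + x' + 1 \<le> a (x + y - 1) + x - 1" using A xx by simp
    then have "Tf s a (x', y') + 2 \<le> Tf s a (x, y)" using E r' by simp
    then show False using T T' by simp
  qed
  obtain G0 where G0: "G0 < length L" "L ! G0 = (i0, j0)" using c0R(1) setL by (metis in_set_conv_nth)
  have uG0: "u ! G0 = i" using un[OF G0(1)] G0(2) Ta0 by simp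
  have iu: "i \<in> set u" using uG0 G0(1) lenL by (metis nth_mem)
  have Geq: "(GREATEST p. p < length u \<and> u ! p = i) = G0"
  proof (rule Greatest_equality)
    show "G0 < length u \<and> u ! G0 = i" using G0 lenL uG0 by simp
  next
    fix q assume q: "q < length u \<and> u ! q = i"
    show "q \<le> G0"
    proof (rule ccontr)
      assume "\<not> q \<le> G0"
      then have gq: "G0 < q" by simp
      have qL: "q < length L" using q lenL by simp
      obtain x' y' where xy': "L ! q = (x', y')" by fastforce
      have cR': "(x', y') \<in> ribbon_cells s" using inL[OF qL] xy' by simp
      have T': "Tf s a (x', y') = i" using un[OF qL] q xy' by simp
      have d': "x' + y' - 1 \<le> k" using F4'[OF cR' T'] .
      have r': "1 \<le> x'" "1 \<le> y'" using R_range[OF cR'] by simp_all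
      have "x' + y' \<le> i0 + j0" using d' c0R(2) r' r0 by simp
      then have mono: "x' \<le> i0" "y' \<le> j0" using R_mono[OF cR' c0R(1)] by simp_all
      have "before (L ! G0) (L ! q)" using colcells_nth[of G0 q s] gq qL unfolding L_def by simp
      then have "j0 < y' \<or> (j0 = y' \<and> x' < i0)" using G0(2) xy' unfolding before_def by simp
      then have "x' < i0" using mono by auto
      then have "Tf s a (x', y') < a k + i0 - 1" using F4(2)[OF ga c0R cR' d'] by simp
      then show False using T' unfolding i_def by simp
    qed
  qed
  have W: "u[G0 := Suc i] = map (Tf s b) L"
  proof (rule nth_equalityI)
    show "length (u[G0 := Suc i]) = length (map (Tf s b) L)" using lenL by simp
  next
    fix p assume "p < length (u[G0 := Suc i])"
    then have pL: "p < length L" using lenL by simp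
    show "u[G0 := Suc i] ! p = map (Tf s b) L ! p"
    proof (cases "p = G0")
      case True
      then show ?thesis using pL G0 Tb0 lenL by simp
    next
      case False
      have ne: "L ! p \<noteq> L ! G0" using False pL G0(1) dl by (simp add: nth_eq_iff_index_eq)
      obtain x y where xy: "L ! p = (x, y)" by fastforce
      have cR: "(x, y) \<in> ribbon_cells s" using inL[OF pL] xy by simp
      have "x + y - 1 \<noteq> k"
      proof
        assume "x + y - 1 = k"
        then have "cell k = (x, y)" using cell_eq[OF cR] by simp
        then show False using ne xy G0(2) c0 by simp
      qed
      then have "b (x + y - 1) = a (x + y - 1)" using bdef by simp
      then have "Tf s b (x, y) = Tf s a (x, y)" using Tf_val[OF cR] by simp
      then show ?thesis using False pL un[OF pL] xy lenL by simp
    qed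
  qed
  have "quasi_f i u = Some (map (Tf s b) L)"
    unfolding quasi_f_def using nobad iu Geq W by simp
  then show ?thesis using ilb iub unfolding u_def L_def by blast
qed


lemma edge_iff:
  assumes ga: "Good (sum_list s) (length s) n a" and gb: "Good (sum_list s) (length s) n b"
  shows "(Tf s a, Tf s b) \<in> hypo_edges n s \<longleftrightarrow> (\<exists>k. 1 \<le> k \<and> k \<le> sum_list s \<and> b = a(k := Suc (a k)))"
proof -
  have va: "Tf s a \<in> hypo_vertices n s" and vb: "Tf s b \<in> hypo_vertices n s"
    using Tf_qrt[OF ga] Tf_qrt[OF gb] unfolding hypo_vertices_def by simp_all
  have "(Tf s a, Tf s b) \<in> hypo_edges n s \<longleftrightarrow> (\<exists>i. 1 \<le> i \<and> i \<le> n - 1 \<and>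
     quasi_f i (map (Tf s a) (colcells s)) = Some (map (Tf s b) (colcells s)))"
    unfolding hypo_edges_def col_reading_eq using va vb by simp
  also have "\<dots> \<longleftrightarrow> (\<exists>k. 1 \<le> k \<and> k \<le> sum_list s \<and> b = a(k := Suc (a k)))"
  proof
    assume "\<exists>i. 1 \<le> i \<and> i \<le> n - 1 \<and> quasi_f i (map (Tf s a) (colcells s)) = Some (map (Tf s b) (colcells s))"
    then obtain i where "quasi_f i (map (Tf s a) (colcells s)) = Some (map (Tf s b) (colcells s))" by blast
    then show "\<exists>k. 1 \<le> k \<and> k \<le> sum_list s \<and> b = a(k := Suc (a k))" using edge_fwd[OF ga gb] by simp
  next
    assume "\<exists>k. 1 \<le> k \<and> k \<le> sum_list s \<and> b = a(k := Suc (a k))"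
    then obtain k where k: "1 \<le> k" "k \<le> sum_list s" "b = a(k := Suc (a k))" by blast
    show "\<exists>i. 1 \<le> i \<and> i \<le> n - 1 \<and> quasi_f i (map (Tf s a) (colcells s)) = Some (map (Tf s b) (colcells s))"
      using edge_bwd[OF ga gb k] .
  qed
  finally show ?thesis .
qed

lemma vertices_eq: "hypo_vertices n s = Tf s ` {a. Good (sum_list s) (length s) n a}"
  unfolding hypo_vertices_def using qrt_Tf Tf_qrt by blast

end

theorem corollary4p7:
  fixes \<sigma> \<tau> :: "nat list" and m n :: nat
  assumes "0 < m" and "is_composition m \<sigma>" and "is_composition m \<tau>"
    and "length \<sigma> = length \<tau>" and "0 < n"
  shows "digraph_iso (hypo_vertices n \<sigma>) (hypo_edges n \<sigma>)
           (hypo_vertices n \<tau>) (hypo_edges n \<tau>) (\<lambda>T. pi_qr \<tau> (qarray_bar \<sigma> T))"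
proof -
  have ms: "sum_list \<sigma> = m" and mt: "sum_list \<tau> = m"
    using assms(2,3) unfolding is_composition_def by simp_all
  have S: "shp \<sigma>" unfolding shp_def using assms(1,2) ms unfolding is_composition_def by auto
  have T: "shp \<tau>" unfolding shp_def using assms(1,3) mt unfolding is_composition_def by auto
  define r where "r = length \<sigma>"
  have rt: "length \<tau> = r" using assms(4) r_def by simp
  define GG where "GG = {a. Good m r n a}"
  define \<phi> where "\<phi> = (\<lambda>T. pi_qr \<tau> (qarray_bar \<sigma> T))"
  have VS: "hypo_vertices n \<sigma> = Tf \<sigma> ` GG"
    using shp.vertices_eq[OF S] ms unfolding GG_def r_def by simp
  have VT: "hypo_vertices n \<tau> = Tf \<tau> ` GG"
    using shp.vertices_eq[OF T] mt rt unfolding GG_def by simp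
  have phi: "\<phi> (Tf \<sigma> a) = Tf \<tau> a" if "a \<in> GG" for a
  proof -
    have g: "Good (sum_list \<sigma>) r n a" using that ms unfolding GG_def by simp
    have "qarray_bar \<sigma> (Tf \<sigma> a) = Aq m a" using shp.bar_Tf[OF S g] ms by simp
    then show ?thesis unfolding \<phi>_def using shp.pi_Aq[OF T] mt by simp
  qed
  have inj: "inj_on \<phi> (hypo_vertices n \<sigma>)"
  proof (rule inj_onI)
    fix x y assume x: "x \<in> hypo_vertices n \<sigma>" and y: "y \<in> hypo_vertices n \<sigma>" and e: "\<phi> x = \<phi> y"
    obtain a where a: "a \<in> GG" "x = Tf \<sigma> a" using x VS by blast
    obtain b where b: "b \<in> GG" "y = Tf \<sigma> b" using y VS by blast
    have "Tf \<tau> a = Tf \<tau> b" using e phi a b by simp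
    moreover have "Good (sum_list \<tau>) r n a" "Good (sum_list \<tau>) r n b" using a b mt unfolding GG_def by simp_all
    ultimately have "a = b" using shp.Tf_inj[OF T] by blast
    then show "x = y" using a b by simp
  qed
  have img: "\<phi> ` hypo_vertices n \<sigma> = hypo_vertices n \<tau>"
  proof -
    have "\<phi> ` hypo_vertices n \<sigma> = (\<lambda>a. \<phi> (Tf \<sigma> a)) ` GG" unfolding VS by (simp add: image_image)
    also have "\<dots> = Tf \<tau> ` GG" using phi by (rule image_cong[OF refl])
    finally show ?thesis using VT by simp
  qed
  have edges: "(x, y) \<in> hypo_edges n \<sigma> \<longleftrightarrow> (\<phi> x, \<phi> y) \<in> hypo_edges n \<tau>"
    if x: "x \<in> hypo_vertices n \<sigma>" and y: "y \<in> hypo_vertices n \<sigma>" for x y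
  proof -
    obtain a where a: "a \<in> GG" "x = Tf \<sigma> a" using x VS by blast
    obtain b where b: "b \<in> GG" "y = Tf \<sigma> b" using y VS by blast
    have gas: "Good (sum_list \<sigma>) (length \<sigma>) n a" "Good (sum_list \<sigma>) (length \<sigma>) n b"
      using a b ms unfolding GG_def r_def by simp_all
    have gat: "Good (sum_list \<tau>) (length \<tau>) n a" "Good (sum_list \<tau>) (length \<tau>) n b"
      using a b mt rt unfolding GG_def by simp_all
    have "(x, y) \<in> hypo_edges n \<sigma> \<longleftrightarrow> (\<exists>k. 1 \<le> k \<and> k \<le> m \<and> b = a(k := Suc (a k)))"
      using shp.edge_iff[OF S gas] a b ms by simp
    also have "\<dots> \<longleftrightarrow> (Tf \<tau> a, Tf \<tau> b) \<in> hypo_edges n \<tau>"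
      using shp.edge_iff[OF T gat] mt by simp
    finally show ?thesis using phi a b by simp
  qed
  show ?thesis
    unfolding digraph_iso_def bij_betw_def using inj img edges unfolding \<phi>_def by blast
qed

end
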